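(* Let $H$ be a real Hilbert space, $A:H\to c_0$ bounded linear with adjoint $A^*:\ell^1\to H$ (identifying $c_0^*=\ell^1$), with $A$ and $A^*$ injective. Let $H_n\subset H$ be a subspace of dimension $n$ with orthogonal projection $P_n$, and let $f^\delta\in H$. Call a solution $u^*$ of $\min\{\|u\|_1:u\in\ell^1,\ P_nA^*u=P_nf^\delta\}$ a solution with minimal support if every solution $u^{**}$ with $\operatorname{supp}u^{**}\subset\operatorname{supp}u^*$ satisfies $u^{**}=u^*$. Then every solution of this problem is a finite convex combination of solutions with minimal support.
   Context: $A^*$ is defined by $\langle A^*u,z\rangle=\sum_iu_i(Az)_i$. $\operatorname{supp}u=\{i:u_i\ne0\}$. *)

theory Defs
  imports "HOL-Analysis.Analysis"
begin

definition in_c0 :: "(nat \<Rightarrow> real) \<Rightarrow> bool" where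
  "in_c0 x \<longleftrightarrow> x \<longlonglongrightarrow> 0"

definition in_l1 :: "(nat \<Rightarrow> real) \<Rightarrow> bool" where
  "in_l1 u \<longleftrightarrow> summable (\<lambda>i. \<bar>u i\<bar>)"

definition l1norm :: "(nat \<Rightarrow> real) \<Rightarrow> real" where
  "l1norm u = (\<Sum>i. \<bar>u i\<bar>)"

definition supp :: "(nat \<Rightarrow> real) \<Rightarrow> nat set" where
  "supp u = {i. u i \<noteq> 0}"

definition orth_proj :: "'h::real_inner set \<Rightarrow> 'h \<Rightarrow> 'h" where
  "orth_proj V x = (THE y. y \<in> V \<and> (\<forall>v\<in>V. inner (x - y) v = 0))"

definition feasible :: "('h::real_inner set) \<Rightarrow> ((nat \<Rightarrow> real) \<Rightarrow> 'h) \<Rightarrow> 'h \<Rightarrow> (nat \<Rightarrow> real) \<Rightarrow> bool" where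
  "feasible V A' f u \<longleftrightarrow> in_l1 u \<and> orth_proj V (A' u) = orth_proj V f"

definition is_solution :: "('h::real_inner set) \<Rightarrow> ((nat \<Rightarrow> real) \<Rightarrow> 'h) \<Rightarrow> 'h \<Rightarrow> (nat \<Rightarrow> real) \<Rightarrow> bool" where
  "is_solution V A' f u \<longleftrightarrow> feasible V A' f u \<and> (\<forall>v. feasible V A' f v \<longrightarrow> l1norm u \<le> l1norm v)"

definition is_minsupp_solution :: "('h::real_inner set) \<Rightarrow> ((nat \<Rightarrow> real) \<Rightarrow> 'h) \<Rightarrow> 'h \<Rightarrow> (nat \<Rightarrow> real) \<Rightarrow> bool" where
  "is_minsupp_solution V A' f u \<longleftrightarrow> is_solution V A' f u \<and>
     (\<forall>w. is_solution V A' f w \<and> supp w \<subseteq> supp u \<longrightarrow> w = u)"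

end

theory Submission
  imports Defs
begin

definition sol :: "((nat \<Rightarrow> real) \<Rightarrow> bool) \<Rightarrow> (nat \<Rightarrow> real) \<Rightarrow> bool" where
  "sol Fe u \<longleftrightarrow> Fe u \<and> (\<forall>v. Fe v \<longrightarrow> l1norm u \<le> l1norm v)"

definition msol :: "((nat \<Rightarrow> real) \<Rightarrow> bool) \<Rightarrow> (nat \<Rightarrow> real) \<Rightarrow> bool" where
  "msol Fe u \<longleftrightarrow> sol Fe u \<and> (\<forall>w. sol Fe w \<and> supp w \<subseteq> supp u \<longrightarrow> w = u)"

definition CC :: "((nat \<Rightarrow> real) \<Rightarrow> bool) \<Rightarrow> (nat \<Rightarrow> real) \<Rightarrow> bool" where
  "CC M u \<longleftrightarrow> (\<exists>(k::nat) c w. (\<forall>j<k. M (w j) \<and> c j \<ge> (0::real))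
                    \<and> (\<Sum>j<k. c j) = 1 \<and> u = (\<lambda>i. \<Sum>j<k. c j * w j i))"

lemma CC_single: "M u \<Longrightarrow> CC M u"
  unfolding CC_def by (rule exI[of _ 1], rule exI[of _ "\<lambda>_. 1"], rule exI[of _ "\<lambda>_. u"]) auto

lemma sum_split_nat: "(\<Sum>j<k1+k2. h j) = (\<Sum>j<k1. h j) + (\<Sum>j<k2. h (k1 + j))"
  for h :: "nat \<Rightarrow> real"
  by (induct k2) auto

lemma CC_comb:
  assumes "CC M x" "CC M y" "0 \<le> a" "0 \<le> b" "a + b = 1"
  shows "CC M (\<lambda>i. a * x i + b * y i)"
proof -
  obtain k1 c1 w1 where 1: "(\<forall>j<(k1::nat). M (w1 j) \<and> c1 j \<ge> (0::real)) \<and> (\<Sum>j<k1. c1 j) = 1 \<and> x = (\<lambda>i. \<Sum>j<k1. c1 j * w1 j i)"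
    using assms(1) unfolding CC_def by blast
  obtain k2 c2 w2 where 2: "(\<forall>j<(k2::nat). M (w2 j) \<and> c2 j \<ge> (0::real)) \<and> (\<Sum>j<k2. c2 j) = 1 \<and> y = (\<lambda>i. \<Sum>j<k2. c2 j * w2 j i)"
    using assms(2) unfolding CC_def by blast
  define c where "c j = (if j < k1 then a * c1 j else b * c2 (j - k1))" for j
  define w where "w j = (if j < k1 then w1 j else w2 (j - k1))" for j
  have "\<forall>j<k1+k2. M (w j) \<and> c j \<ge> 0"
    using 1 2 assms(3,4) by (auto simp: c_def w_def)
  moreover have "(\<Sum>j<k1+k2. c j) = 1"
    unfolding sum_split_nat using 1 2 assms(5)
    by (simp add: c_def sum_distrib_left[symmetric])
  moreover have "(\<lambda>i. a * x i + b * y i) = (\<lambda>i. \<Sum>j<k1+k2. c j * w j i)"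
  proof
    fix i
    show "a * x i + b * y i = (\<Sum>j<k1+k2. c j * w j i)"
      unfolding sum_split_nat using 1 2
      by (simp add: c_def w_def sum_distrib_left mult.assoc)
  qed
  ultimately show ?thesis unfolding CC_def by blast
qed

lemma l1norm_fin:
  assumes "finite T" "supp v \<subseteq> T"
  shows "l1norm v = (\<Sum>i\<in>T. \<bar>v i\<bar>)"
  unfolding l1norm_def using assms by (intro suminf_finite) (auto simp: supp_def)

lemma abs_add_eq_imp: "\<bar>a + b\<bar> = \<bar>a\<bar> + \<bar>b\<bar> \<Longrightarrow> 0 \<le> a * (b::real)"
  by (cases "a \<ge> 0"; cases "b \<ge> 0") (auto simp: mult_nonneg_nonneg mult_nonpos_nonpos)

lemma sgn_prod: "0 \<le> a * b \<Longrightarrow> 0 \<le> sgn a * (b::real)"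
  by (cases a rule: linorder_cases) (auto simp: zero_le_mult_iff)

lemma sgn_prod0: "a \<noteq> 0 \<Longrightarrow> sgn a * (b::real) = 0 \<Longrightarrow> b = 0"
  by (simp add: sgn_0_0)

locale fe =
  fixes Fe :: "(nat \<Rightarrow> real) \<Rightarrow> bool"
  assumes P1: "Fe u \<Longrightarrow> in_l1 u"
    and P2: "Fe u \<Longrightarrow> Fe w \<Longrightarrow> Fe (\<lambda>i. u i + t * (w i - u i))"
begin

lemma sol_eq: "sol Fe u \<Longrightarrow> sol Fe w \<Longrightarrow> l1norm u = l1norm w"
  unfolding sol_def by (meson order.antisym)

lemma sign_cons:
  assumes u: "sol Fe u" and w: "sol Fe w"
  shows "0 \<le> u i * w i"
proof -
  define m where "m i = u i + (1/2) * (w i - u i)" for i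
  have Fm: "Fe m" using P2 u w unfolding sol_def m_def by blast
  have le: "l1norm u \<le> l1norm m" using u Fm unfolding sol_def by blast
  have eq: "l1norm u = l1norm w" using sol_eq u w .
  have su: "summable (\<lambda>i. \<bar>u i\<bar>)" and sw: "summable (\<lambda>i. \<bar>w i\<bar>)" and sm: "summable (\<lambda>i. \<bar>m i\<bar>)"
    using P1 u w Fm unfolding sol_def in_l1_def by auto
  define h where "h i = (\<bar>u i\<bar> + \<bar>w i\<bar>)/2 - \<bar>m i\<bar>" for i
  have hm: "\<bar>m i\<bar> = \<bar>u i + w i\<bar>/2" for i unfolding m_def by (simp add: field_simps abs_divide)
  have h0: "0 \<le> h i" for i unfolding h_def hm using abs_triangle_ineq[of "u i" "w i"] by simp
  have sh: "summable h" unfolding h_def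
    by (intro summable_diff summable_divide summable_add su sw sm)
  have "suminf h = (l1norm u + l1norm w)/2 - l1norm m"
  proof -
    have a: "summable (\<lambda>i. (\<bar>u i\<bar> + \<bar>w i\<bar>)/2)" by (intro summable_divide summable_add su sw)
    have "suminf h = (\<Sum>i. (\<bar>u i\<bar> + \<bar>w i\<bar>)/2) - (\<Sum>i. \<bar>m i\<bar>)"
      unfolding h_def using suminf_diff[OF a sm] by simp
    also have "(\<Sum>i. (\<bar>u i\<bar> + \<bar>w i\<bar>)/2) = (\<Sum>i. (\<bar>u i\<bar> + \<bar>w i\<bar>))/2"
      by (intro suminf_divide summable_add su sw)
    also have "(\<Sum>i. (\<bar>u i\<bar> + \<bar>w i\<bar>)) = l1norm u + l1norm w"
      unfolding l1norm_def using suminf_add[OF su sw] by simp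
    finally show ?thesis unfolding l1norm_def by simp
  qed
  also have "\<dots> \<le> 0" using le eq by simp
  finally have "suminf h \<le> 0" .
  moreover have "0 \<le> suminf h" using sh h0 by (simp add: suminf_nonneg)
  ultimately have "suminf h = 0" by simp
  hence "h i = 0" using suminf_eq_zero_iff[OF sh] h0 by blast
  hence "\<bar>u i + w i\<bar> = \<bar>u i\<bar> + \<bar>w i\<bar>" unfolding h_def hm by simp
  thus ?thesis by (rule abs_add_eq_imp)
qed

end

lemma exists_step:
  fixes u d :: "nat \<Rightarrow> real"
  assumes T: "finite T" and i0: "i0 \<in> T" "u i0 * d i0 < 0"
  shows "\<exists>t>0. (\<forall>i\<in>T. 0 \<le> u i * (u i + t * d i)) \<and> (\<exists>i\<in>T. u i + t * d i = 0)"
proof -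
  define I where "I = {i\<in>T. u i * d i < 0}"
  have fI: "finite I" using T unfolding I_def by simp
  have neI: "I \<noteq> {}" using i0 unfolding I_def by blast
  define t where "t = Min ((\<lambda>i. - u i / d i) ` I)"
  have pos: "0 < - u i / d i" if "i \<in> I" for i
  proof -
    have "u i * d i < 0" using that unfolding I_def by simp
    hence "d i \<noteq> 0" by auto
    have "- u i / d i = - (u i * d i) / (d i * d i)" using \<open>d i \<noteq> 0\<close> by (simp add: field_simps)
    moreover have "0 < d i * d i" using \<open>d i \<noteq> 0\<close> by (meson mult_neg_neg mult_pos_pos linorder_neq_iff)
    moreover have "0 < - (u i * d i) / (d i * d i)" using calculation(2) \<open>u i * d i < 0\<close> by (intro divide_pos_pos) auto
    ultimately show ?thesis by simp
  qed
  have "t \<in> (\<lambda>i. - u i / d i) ` I" unfolding t_def by (rule Min_in) (use fI neI in auto)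
  then obtain i1 where i1: "i1 \<in> I" "t = - u i1 / d i1" by auto
  have tpos: "0 < t" using pos i1 by simp
  have tle: "t \<le> - u i / d i" if "i \<in> I" for i
    unfolding t_def using fI that by simp
  have "0 \<le> u i * (u i + t * d i)" if "i \<in> T" for i
  proof (cases "i \<in> I")
    case True
    hence ud: "u i * d i < 0" unfolding I_def by simp
    hence "d i \<noteq> 0" by auto
    have "u i * (u i + t * d i) = u i * u i + t * (u i * d i)" by (simp add: algebra_simps)
    also have "\<dots> \<ge> u i * u i + (- u i / d i) * (u i * d i)"
      using tle[OF True] ud by (intro add_left_mono mult_right_mono_neg) auto
    also have "u i * u i + (- u i / d i) * (u i * d i) = 0" using \<open>d i \<noteq> 0\<close> by (simp add: field_simps)
    finally show ?thesis by simp
  next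
    case False
    hence "0 \<le> u i * d i" using that unfolding I_def by simp
    hence "0 \<le> u i * u i + t * (u i * d i)" using tpos by (simp add: add_nonneg_nonneg)
    thus ?thesis by (simp add: algebra_simps)
  qed
  moreover have "u i1 + t * d i1 = 0" using i1 pos[OF i1(1)] by (auto simp: field_simps)
  moreover have "i1 \<in> T" using i1 unfolding I_def by simp
  ultimately show ?thesis using tpos by blast
qed

context fe begin

lemma line_sol:
  assumes u: "sol Fe u" and w: "sol Fe w" and T: "finite (supp u)" and sw: "supp w \<subseteq> supp u"
    and good: "\<forall>i. 0 \<le> u i * (u i + t * (w i - u i))"
  shows "sol Fe (\<lambda>i. u i + t * (w i - u i))"
proof -
  define v where "v i = u i + t * (w i - u i)" for i
  have Fv: "Fe v" using P2 u w unfolding sol_def v_def by blast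
  have sv: "supp v \<subseteq> supp u" using sw unfolding supp_def v_def by auto
  have av: "\<bar>v i\<bar> = sgn (u i) * v i" if "i \<in> supp u" for i
  proof -
    have "u i \<noteq> 0" using that unfolding supp_def by simp
    moreover have "0 \<le> u i * v i" using good unfolding v_def by simp
    ultimately show ?thesis by (cases "u i > 0") (auto simp: zero_le_mult_iff)
  qed
  have aw: "\<bar>w i\<bar> = sgn (u i) * w i" if "i \<in> supp u" for i
  proof -
    have "u i \<noteq> 0" using that unfolding supp_def by simp
    moreover have "0 \<le> u i * w i" using sign_cons[OF u w] .
    ultimately show ?thesis by (cases "u i > 0") (auto simp: zero_le_mult_iff)
  qed
  have au: "\<bar>u i\<bar> = sgn (u i) * u i" for i by (simp add: abs_sgn)
  have "l1norm v = (\<Sum>i\<in>supp u. \<bar>v i\<bar>)" using l1norm_fin[OF T sv] .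
  also have "\<dots> = (\<Sum>i\<in>supp u. sgn (u i) * u i + t * (sgn (u i) * w i - sgn (u i) * u i))"
    using av by (intro sum.cong) (auto simp: v_def algebra_simps)
  also have "\<dots> = (\<Sum>i\<in>supp u. sgn (u i) * u i) + t * ((\<Sum>i\<in>supp u. sgn (u i) * w i) - (\<Sum>i\<in>supp u. sgn (u i) * u i))"
    by (simp add: sum.distrib sum_distrib_left[symmetric] sum_subtractf)
  also have "(\<Sum>i\<in>supp u. sgn (u i) * w i) = (\<Sum>i\<in>supp u. \<bar>w i\<bar>)"
    using aw by (intro sum.cong) auto
  also have "(\<Sum>i\<in>supp u. sgn (u i) * u i) = (\<Sum>i\<in>supp u. \<bar>u i\<bar>)"
    using au by (intro sum.cong) auto
  also have "(\<Sum>i\<in>supp u. \<bar>w i\<bar>) = l1norm w" using l1norm_fin[OF T sw] by simp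
  also have "(\<Sum>i\<in>supp u. \<bar>u i\<bar>) = l1norm u" using l1norm_fin[OF T] by simp
  finally have "l1norm v = l1norm u" using sol_eq[OF u w] by simp
  thus ?thesis using Fv u unfolding sol_def v_def[abs_def] by simp
qed

lemma carath:
  "\<forall>u. sol Fe u \<and> finite (supp u) \<and> card (supp u) = N \<longrightarrow> CC (msol Fe) u"
proof (induction N rule: less_induct)
  case (less N)
  show ?case
  proof (intro allI impI)
    fix u assume asm: "sol Fe u \<and> finite (supp u) \<and> card (supp u) = N"
    hence u: "sol Fe u" and T: "finite (supp u)" and cN: "card (supp u) = N" by auto
    show "CC (msol Fe) u"
    proof (cases "msol Fe u")
      case True thus ?thesis by (rule CC_single)
    next
      case False
      then obtain w where w: "sol Fe w" "supp w \<subseteq> supp u" "w \<noteq> u"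
        using u unfolding msol_def by blast
      define d where "d i = w i - u i" for i
      have sgnsum: "(\<Sum>i\<in>supp u. sgn (u i) * d i) = 0"
      proof -
        have aw: "sgn (u i) * w i = \<bar>w i\<bar>" if "i \<in> supp u" for i
        proof -
          have "u i \<noteq> 0" using that unfolding supp_def by simp
          moreover have "0 \<le> u i * w i" using sign_cons[OF u w(1)] .
          ultimately show ?thesis by (cases "u i > 0") (auto simp: zero_le_mult_iff)
        qed
        have "(\<Sum>i\<in>supp u. sgn (u i) * d i) = (\<Sum>i\<in>supp u. sgn (u i) * w i) - (\<Sum>i\<in>supp u. sgn (u i) * u i)"
          unfolding d_def by (simp add: algebra_simps sum_subtractf)
        also have "(\<Sum>i\<in>supp u. sgn (u i) * w i) = (\<Sum>i\<in>supp u. \<bar>w i\<bar>)"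
          using aw by (intro sum.cong) auto
        also have "(\<Sum>i\<in>supp u. sgn (u i) * u i) = (\<Sum>i\<in>supp u. \<bar>u i\<bar>)"
          by (intro sum.cong) (auto simp: abs_sgn)
        finally have "(\<Sum>i\<in>supp u. sgn (u i) * d i) = (\<Sum>i\<in>supp u. \<bar>w i\<bar>) - (\<Sum>i\<in>supp u. \<bar>u i\<bar>)" .
        also have "\<dots> = l1norm w - l1norm u" using l1norm_fin[OF T w(2)] l1norm_fin[OF T] by simp
        finally show ?thesis using sol_eq[OF u w(1)] by simp
      qed
      have dz: "d i = 0" if "i \<notin> supp u" for i
        using that w(2) unfolding d_def supp_def by auto
      have ex_neg: "\<exists>i\<in>supp u. u i * d i < 0"
      proof (rule ccontr)
        assume "\<not> ?thesis"
        hence nn: "\<forall>i\<in>supp u. 0 \<le> sgn (u i) * d i"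
          by (intro ballI sgn_prod) (simp add: not_less)
        hence "\<forall>i\<in>supp u. sgn (u i) * d i = 0"
          using sum_nonneg_eq_0_iff[OF T, of "\<lambda>i. sgn (u i) * d i"] sgnsum by simp
        hence "\<forall>i. d i = 0"
        proof (intro allI)
          fix i assume h: "\<forall>i\<in>supp u. sgn (u i) * d i = 0"
          show "d i = 0"
          proof (cases "i \<in> supp u")
            case True thus ?thesis using h sgn_prod0[of "u i" "d i"] unfolding supp_def by simp
          qed (rule dz)
        qed
        hence "w = u" unfolding d_def by auto
        thus False using w(3) by simp
      qed
      have ex_pos: "\<exists>i\<in>supp u. u i * (- d i) < 0"
      proof (rule ccontr)
        assume "\<not> ?thesis"
        hence nn: "\<forall>i\<in>supp u. 0 \<le> sgn (u i) * (- d i)"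
          by (intro ballI sgn_prod) (simp add: not_less)
        have "(\<Sum>i\<in>supp u. sgn (u i) * (- d i)) = 0" using sgnsum by (simp add: sum_negf)
        hence "\<forall>i\<in>supp u. sgn (u i) * (- d i) = 0"
          using sum_nonneg_eq_0_iff[OF T, of "\<lambda>i. sgn (u i) * (- d i)"] nn by simp
        hence "\<forall>i. d i = 0"
        proof (intro allI)
          fix i assume h: "\<forall>i\<in>supp u. sgn (u i) * (- d i) = 0"
          show "d i = 0"
          proof (cases "i \<in> supp u")
            case True thus ?thesis using h sgn_prod0[of "u i" "- d i"] unfolding supp_def by simp
          qed (rule dz)
        qed
        hence "w = u" unfolding d_def by auto
        thus False using w(3) by simp
      qed
      obtain t1 where t1: "t1 > 0" "\<forall>i\<in>supp u. 0 \<le> u i * (u i + t1 * d i)" "\<exists>i\<in>supp u. u i + t1 * d i = 0"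
        using exists_step[OF T, where u=u and d=d] ex_neg by blast
      obtain t2 where t2: "t2 > 0" "\<forall>i\<in>supp u. 0 \<le> u i * (u i + t2 * (- d i))" "\<exists>i\<in>supp u. u i + t2 * (- d i) = 0"
        using exists_step[OF T, where u=u and d="\<lambda>i. - d i"] ex_pos by blast
      define v1 where "v1 i = u i + t1 * (w i - u i)" for i
      define v2 where "v2 i = u i + (- t2) * (w i - u i)" for i
      have nsu: "u i = 0" if "i \<notin> supp u" for i using that unfolding supp_def by simp
      have g1: "\<forall>i. 0 \<le> u i * (u i + t1 * (w i - u i))"
      proof
        fix i show "0 \<le> u i * (u i + t1 * (w i - u i))"
          using t1(2) nsu[of i] unfolding d_def by (cases "i \<in> supp u") auto
      qed
      have g2: "\<forall>i. 0 \<le> u i * (u i + (- t2) * (w i - u i))"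
      proof
        fix i show "0 \<le> u i * (u i + (- t2) * (w i - u i))"
          using t2(2) nsu[of i] unfolding d_def by (cases "i \<in> supp u") (auto simp: algebra_simps)
      qed
      have sv1: "sol Fe v1" unfolding v1_def[abs_def] by (rule line_sol[OF u w(1) T w(2) g1])
      have sv2: "sol Fe v2" unfolding v2_def[abs_def] by (rule line_sol[OF u w(1) T w(2) g2])
      obtain j1 where j1: "j1 \<in> supp u" "v1 j1 = 0" using t1(3) unfolding v1_def d_def by auto
      obtain j2 where j2: "j2 \<in> supp u" "v2 j2 = 0" using t2(3) unfolding v2_def d_def by (auto simp: algebra_simps)
      have s1: "supp v1 \<subseteq> supp u - {j1}" using j1 w(2) unfolding supp_def v1_def by auto
      have s2: "supp v2 \<subseteq> supp u - {j2}" using j2 w(2) unfolding supp_def v2_def by auto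
      have f1: "finite (supp v1)" using s1 T finite_subset by blast
      have f2: "finite (supp v2)" using s2 T finite_subset by blast
      have c1: "card (supp v1) < N"
      proof -
        have "card (supp v1) \<le> card (supp u - {j1})" by (rule card_mono[OF _ s1]) (use T in simp)
        also have "\<dots> < card (supp u)" by (rule card_Diff1_less[OF T j1(1)])
        finally show ?thesis using cN by simp
      qed
      have c2: "card (supp v2) < N"
      proof -
        have "card (supp v2) \<le> card (supp u - {j2})" by (rule card_mono[OF _ s2]) (use T in simp)
        also have "\<dots> < card (supp u)" by (rule card_Diff1_less[OF T j2(1)])
        finally show ?thesis using cN by simp
      qed
      have CC1: "CC (msol Fe) v1" using less.IH[OF c1] sv1 f1 by blast
      have CC2: "CC (msol Fe) v2" using less.IH[OF c2] sv2 f2 by blast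
      have "CC (msol Fe) (\<lambda>i. (t2/(t1+t2)) * v1 i + (t1/(t1+t2)) * v2 i)"
      proof (rule CC_comb[OF CC1 CC2])
        show "0 \<le> t2 / (t1 + t2)" "0 \<le> t1 / (t1 + t2)" using t1(1) t2(1) by auto
        have "t1 + t2 \<noteq> 0" using t1(1) t2(1) by simp
        thus "t2 / (t1 + t2) + t1 / (t1 + t2) = 1" by (simp add: add_divide_distrib[symmetric])
      qed
      moreover have "(\<lambda>i. (t2/(t1+t2)) * v1 i + (t1/(t1+t2)) * v2 i) = u"
      proof
        fix i
        have "t1 + t2 \<noteq> 0" using t1(1) t2(1) by simp
        have e: "t2 * v1 i + t1 * v2 i = (t1 + t2) * u i" unfolding v1_def v2_def by (simp add: algebra_simps)
        have "(t2/(t1+t2)) * v1 i + (t1/(t1+t2)) * v2 i = (t2 * v1 i + t1 * v2 i) / (t1 + t2)"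
          by (simp add: add_divide_distrib)
        also have "\<dots> = u i" using e \<open>t1 + t2 \<noteq> 0\<close> by simp
        finally show "(t2/(t1+t2)) * v1 i + (t1/(t1+t2)) * v2 i = u i" .
      qed
      ultimately show ?thesis by simp
    qed
  qed
qed

lemma all_CC: "sol Fe u \<Longrightarrow> finite (supp u) \<Longrightarrow> CC (msol Fe) u"
  using carath by blast

end


lemma proj_exists:
  fixes S :: "'h::real_inner set"
  assumes "finite S"
  shows "\<exists>p\<in>span S. \<forall>v\<in>span S. inner (x - p) v = 0"
proof -
  obtain C where C: "finite C" "span C = span S" "pairwise orthogonal C"
    using basis_orthogonal[OF assms] by blast
  define p where "p = (\<Sum>c\<in>C. (inner x c / inner c c) *\<^sub>R c)"
  have pin: "p \<in> span C" unfolding p_def by (intro span_sum span_scale span_base)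
  have orth: "orthogonal (x - p) c'" if "c' \<in> C" for c'
  proof -
    have "inner p c' = (\<Sum>c\<in>C. (inner x c / inner c c) * inner c c')"
      unfolding p_def by (simp add: inner_sum_left)
    also have "\<dots> = (\<Sum>c\<in>C. if c = c' then (inner x c' / inner c' c') * inner c' c' else 0)"
      using C(3) that by (intro sum.cong) (auto simp: pairwise_def orthogonal_def)
    also have "\<dots> = (inner x c' / inner c' c') * inner c' c'" using C(1) that by simp
    also have "\<dots> = inner x c'" by (cases "c' = 0") auto
    finally show ?thesis unfolding orthogonal_def by (simp add: inner_diff_left)
  qed
  have "\<forall>v\<in>span S. inner (x - p) v = 0"
    using orthogonal_to_span[of _ C "x - p"] orth C(2) unfolding orthogonal_def by blast
  thus ?thesis using pin C(2) by blast
qed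

lemma proj_unique:
  fixes V :: "'h::real_inner set"
  assumes "p \<in> span S" "p' \<in> span S" "\<forall>v\<in>span S. inner (x - p) v = 0" "\<forall>v\<in>span S. inner (x - p') v = 0"
  shows "p = p'"
proof -
  have d: "p - p' \<in> span S" using assms(1,2) by (rule span_diff)
  have "inner (p - p') (p - p') = inner (x - p') (p - p') - inner (x - p) (p - p')"
    by (simp add: inner_diff_left)
  also have "\<dots> = 0" using assms(3,4) d by simp
  finally show ?thesis by simp
qed

lemma orth_proj_char:
  fixes S :: "'h::real_inner set"
  assumes "finite S"
  shows "orth_proj (span S) x \<in> span S \<and> (\<forall>v\<in>span S. inner (x - orth_proj (span S) x) v = 0)"
proof -
  have "\<exists>!y. y \<in> span S \<and> (\<forall>v\<in>span S. inner (x - y) v = 0)"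
    using proj_exists[OF assms, of x] proj_unique by blast
  thus ?thesis unfolding orth_proj_def by (rule theI')
qed

lemma orth_proj_eq_iff:
  fixes S :: "'h::real_inner set"
  assumes "finite S"
  shows "orth_proj (span S) a = orth_proj (span S) f \<longleftrightarrow> (\<forall>v\<in>span S. inner (a - f) v = 0)"
proof
  assume eq: "orth_proj (span S) a = orth_proj (span S) f"
  show "\<forall>v\<in>span S. inner (a - f) v = 0"
  proof
    fix v assume v: "v \<in> span S"
    have "inner (a - f) v = inner (a - orth_proj (span S) a) v - inner (f - orth_proj (span S) f) v"
      using eq by (simp add: inner_diff_left)
    thus "inner (a - f) v = 0" using orth_proj_char[OF assms, of a] orth_proj_char[OF assms, of f] v by simp
  qed
next
  assume h: "\<forall>v\<in>span S. inner (a - f) v = 0"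
  have "\<forall>v\<in>span S. inner (a - orth_proj (span S) f) v = 0"
  proof
    fix v assume v: "v \<in> span S"
    have "inner (a - orth_proj (span S) f) v = inner (a - f) v + inner (f - orth_proj (span S) f) v"
      by (simp add: inner_diff_left)
    thus "inner (a - orth_proj (span S) f) v = 0" using h orth_proj_char[OF assms, of f] v by simp
  qed
  thus "orth_proj (span S) a = orth_proj (span S) f"
    using proj_unique[of "orth_proj (span S) a" S "orth_proj (span S) f" a]
      orth_proj_char[OF assms, of a] orth_proj_char[OF assms, of f] by blast
qed

lemma abs_lin:
  fixes a b t :: real
  assumes "a \<noteq> 0" "\<bar>t\<bar> * \<bar>b\<bar> \<le> \<bar>a\<bar>"
  shows "\<bar>a + t * b\<bar> = \<bar>a\<bar> + t * (sgn a * b)"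
proof -
  have tb: "\<bar>t * b\<bar> \<le> \<bar>a\<bar>" using assms(2) by (simp add: abs_mult)
  show ?thesis
  proof (cases "a > 0")
    case True
    have "- \<bar>t * b\<bar> \<le> t * b" by simp
    hence "0 \<le> a + t * b" using tb True by simp
    thus ?thesis using True by simp
  next
    case False
    hence a: "a < 0" using assms(1) by simp
    have "t * b \<le> \<bar>t * b\<bar>" by simp
    hence "a + t * b \<le> 0" using tb a by simp
    thus ?thesis using a by simp
  qed
qed

lemma abs_aff: "\<bar>a + t * (b - a)\<bar> \<le> \<bar>a\<bar> + \<bar>t\<bar> * (\<bar>b\<bar> + \<bar>a::real\<bar>)"
proof -
  have "\<bar>a + t * (b - a)\<bar> \<le> \<bar>a\<bar> + \<bar>t * (b - a)\<bar>" by (rule abs_triangle_ineq)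
  also have "\<bar>t * (b - a)\<bar> = \<bar>t\<bar> * \<bar>b - a\<bar>" by (simp add: abs_mult)
  also have "\<bar>t\<bar> * \<bar>b - a\<bar> \<le> \<bar>t\<bar> * (\<bar>b\<bar> + \<bar>a\<bar>)" by (intro mult_left_mono abs_triangle_ineq4) simp
  finally show ?thesis by simp
qed

locale prob =
  fixes A :: "'h::{real_inner, complete_space} \<Rightarrow> (nat \<Rightarrow> real)"
    and A' :: "(nat \<Rightarrow> real) \<Rightarrow> 'h"
    and B :: "'h set" and f :: 'h
  assumes A_lin: "\<And>a b x y. A (a *\<^sub>R x + b *\<^sub>R y) = (\<lambda>i. a * A x i + b * A y i)"
    and A_c0: "\<And>z. in_c0 (A z)"
    and A_bdd: "\<exists>C. \<forall>z i. \<bar>A z i\<bar> \<le> C * norm z"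
    and adjoint: "\<And>u z. in_l1 u \<Longrightarrow> inner (A' u) z = (\<Sum>i. u i * A z i)"
    and B_fin: "finite B"
begin

lemma A_add: "A (x + y) i = A x i + A y i"
  using A_lin[of 1 x 1 y] by (metis (no_types) mult_1 scaleR_one)

lemma A_scale: "A (c *\<^sub>R x) i = c * A x i"
  using A_lin[of c x 0 x] by (metis (no_types, lifting) add.right_neutral mult_zero_left scaleR_zero_left)

lemma A_zero: "A 0 i = 0"
  using A_scale[of 0 0 i] by simp

lemma summ_uA:
  assumes "in_l1 u" shows "summable (\<lambda>i. u i * A z i)"
proof -
  obtain Cb where Cb: "\<forall>z i. \<bar>A z i\<bar> \<le> Cb * norm z" using A_bdd by blast
  have s: "summable (\<lambda>i. \<bar>u i\<bar> * (Cb * norm z))"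
    using assms unfolding in_l1_def by (rule summable_mult2)
  show ?thesis
  proof (rule summable_comparison_test'[OF s])
    fix i :: nat
    have "\<bar>u i * A z i\<bar> = \<bar>u i\<bar> * \<bar>A z i\<bar>" by (simp add: abs_mult)
    also have "\<dots> \<le> \<bar>u i\<bar> * (Cb * norm z)" using Cb by (intro mult_left_mono) auto
    finally show "norm (u i * A z i) \<le> \<bar>u i\<bar> * (Cb * norm z)" by simp
  qed
qed

abbreviation "F \<equiv> feasible (span B) A' f"

lemma feas_iff: "F u \<longleftrightarrow> in_l1 u \<and> (\<forall>v\<in>span B. (\<Sum>i. u i * A v i) = inner f v)"
proof -
  have "F u \<longleftrightarrow> in_l1 u \<and> (\<forall>v\<in>span B. inner (A' u - f) v = 0)"
    unfolding feasible_def using orth_proj_eq_iff[OF B_fin] by simp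
  also have "\<dots> \<longleftrightarrow> in_l1 u \<and> (\<forall>v\<in>span B. (\<Sum>i. u i * A v i) = inner f v)"
    using adjoint by (auto simp: inner_diff_left)
  finally show ?thesis .
qed

lemma F_aff:
  assumes u: "F u" and w: "F w"
  shows "F (\<lambda>i. u i + t * (w i - u i))"
proof -
  have lu: "in_l1 u" and lw: "in_l1 w" using u w feas_iff by auto
  have "summable (\<lambda>i. \<bar>u i\<bar> + \<bar>t\<bar> * (\<bar>w i\<bar> + \<bar>u i\<bar>))"
    using lu lw unfolding in_l1_def by (intro summable_add summable_mult)
  hence l: "in_l1 (\<lambda>i. u i + t * (w i - u i))" unfolding in_l1_def
    by (rule summable_comparison_test') (simp add: abs_aff)
  have "(\<Sum>i. (u i + t * (w i - u i)) * A v i) = inner f v" if v: "v \<in> span B" for v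
  proof -
    have su: "summable (\<lambda>i. u i * A v i)" and sw: "summable (\<lambda>i. w i * A v i)"
      using summ_uA lu lw by auto
    have "(\<Sum>i. (u i + t * (w i - u i)) * A v i) = (\<Sum>i. u i * A v i + t * (w i * A v i - u i * A v i))"
      by (simp add: algebra_simps)
    also have "\<dots> = (\<Sum>i. u i * A v i) + (\<Sum>i. t * (w i * A v i - u i * A v i))"
      using su sw by (intro suminf_add[symmetric] summable_mult summable_diff)
    also have "(\<Sum>i. t * (w i * A v i - u i * A v i)) = t * ((\<Sum>i. w i * A v i) - (\<Sum>i. u i * A v i))"
      using su sw by (simp add: suminf_mult summable_diff suminf_diff)
    finally show ?thesis using u w v feas_iff by simp
  qed
  thus ?thesis using l feas_iff by simp
qed

sublocale fe F
proof
  fix u assume "F u" thus "in_l1 u" using feas_iff by blast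
next
  fix u w t assume "F u" "F w" thus "F (\<lambda>i. u i + t * (w i - u i))" by (rule F_aff)
qed

end


context prob begin

lemma gv_exists:
  "\<exists>gv. (\<forall>i. gv i \<in> span B) \<and> (\<forall>i v. v \<in> span B \<longrightarrow> inner (gv i) v = A v i)
      \<and> (\<lambda>i. norm (gv i)) \<longlonglongrightarrow> 0"
proof -
  obtain C where C: "finite C" "span C = span B" "pairwise orthogonal C"
    using basis_orthogonal[OF B_fin] by blast
  define gv where "gv i = (\<Sum>c\<in>C. (A c i / inner c c) *\<^sub>R c)" for i
  have 1: "gv i \<in> span B" for i
    unfolding gv_def C(2)[symmetric] by (intro span_sum span_scale span_base)
  have onC: "inner (gv i) c' = A c' i" if "c' \<in> C" for i c'
  proof -
    have "inner (gv i) c' = (\<Sum>c\<in>C. (A c i / inner c c) * inner c c')"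
      unfolding gv_def by (simp add: inner_sum_left)
    also have "\<dots> = (\<Sum>c\<in>C. if c = c' then (A c' i / inner c' c') * inner c' c' else 0)"
      using C(3) that by (intro sum.cong) (auto simp: pairwise_def orthogonal_def)
    also have "\<dots> = (A c' i / inner c' c') * inner c' c'" using C(1) that by simp
    also have "\<dots> = A c' i" by (cases "c' = 0") (auto simp: A_zero)
    finally show ?thesis .
  qed
  have 2: "inner (gv i) v = A v i" if "v \<in> span B" for i v
  proof -
    have "v \<in> span C" using that C(2) by simp
    thus ?thesis
    proof (rule span_induct)
      show "subspace {v. inner (gv i) v = A v i}"
        unfolding subspace_def by (auto simp: A_zero A_add A_scale inner_add_right)
    qed (rule onC)
  qed
  have "(\<lambda>i. \<Sum>c\<in>C. (A c i / inner c c) *\<^sub>R c) \<longlonglongrightarrow> (\<Sum>c\<in>C. 0 *\<^sub>R c)"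
  proof (intro tendsto_sum tendsto_scaleR tendsto_const)
    fix c show "(\<lambda>i. A c i / inner c c) \<longlonglongrightarrow> 0"
      using A_c0[of c] unfolding in_c0_def by (rule tendsto_divide_zero)
  qed
  hence "gv \<longlonglongrightarrow> 0" unfolding gv_def[abs_def] by simp
  hence "(\<lambda>i. norm (gv i)) \<longlonglongrightarrow> 0" by (rule tendsto_norm_zero)
  thus ?thesis using 1 2 by blast
qed

lemma fin_supp:
  assumes u: "sol F u"
  shows "finite (supp u)"
proof -
  obtain gv where gvB: "\<And>i. gv i \<in> span B" and gvA: "\<And>i v. v \<in> span B \<Longrightarrow> inner (gv i) v = A v i"
     and gv0: "(\<lambda>i. norm (gv i)) \<longlonglongrightarrow> 0" using gv_exists by blast
  define T where "T = supp u"
  have Fu: "F u" and opt: "\<And>v. F v \<Longrightarrow> l1norm u \<le> l1norm v" using u unfolding sol_def by auto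
  have lu: "in_l1 u" using Fu feas_iff by blast
  obtain G where G: "G \<subseteq> gv ` T" "independent G" "gv ` T \<subseteq> span G"
    using maximal_independent_subset[of "gv ` T"] by blast
  have "G \<subseteq> span B" using G(1) gvB by blast
  hence fG: "finite G" using independent_span_bound[OF B_fin G(2)] by blast
  have "\<forall>g\<in>G. \<exists>j. j \<in> T \<and> gv j = g" using G(1) by blast
  then obtain \<iota> where \<iota>: "\<And>g. g \<in> G \<Longrightarrow> \<iota> g \<in> T \<and> gv (\<iota> g) = g" by metis
  have "\<forall>g\<in>G. \<exists>p. p \<in> span (G - {g}) \<and> (\<forall>v\<in>span (G - {g}). inner (g - p) v = 0)"
    using proj_exists fG by blast
  then obtain pp where pp: "\<And>g. g \<in> G \<Longrightarrow> pp g \<in> span (G - {g}) \<and> (\<forall>v\<in>span (G - {g}). inner (g - pp g) v = 0)"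
    by metis
  define h where "h g = g - pp g" for g
  have hpos: "0 < inner (h g) g" if g: "g \<in> G" for g
  proof -
    have "h g \<noteq> 0"
    proof
      assume "h g = 0"
      hence "g \<in> span (G - {g})" using pp[OF g] unfolding h_def by simp
      moreover have "insert g (G - {g}) = G" using g by blast
      ultimately have "dependent G" using independent_insert[of g "G - {g}"] by auto
      thus False using G(2) by simp
    qed
    hence "0 < inner (h g) (h g)" by simp
    moreover have "inner (h g) g = inner (h g) (h g) + inner (h g) (pp g)"
      unfolding h_def by (simp add: inner_diff_right)
    moreover have "inner (h g) (pp g) = 0" using pp[OF g] unfolding h_def by blast
    ultimately show ?thesis by simp
  qed
  have hzero: "inner (h g) g' = 0" if "g \<in> G" "g' \<in> G" "g' \<noteq> g" for g g'
  proof -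
    have "g' \<in> span (G - {g})" using that by (intro span_base) blast
    thus ?thesis using pp[OF that(1)] unfolding h_def by blast
  qed
  define q where "q = (\<Sum>g\<in>G. (sgn (u (\<iota> g)) / inner (h g) g) *\<^sub>R h g)"
  have qg: "inner q g' = sgn (u (\<iota> g'))" if g': "g' \<in> G" for g'
  proof -
    have "inner q g' = (\<Sum>g\<in>G. (sgn (u (\<iota> g)) / inner (h g) g) * inner (h g) g')"
      unfolding q_def by (simp add: inner_sum_left)
    also have "\<dots> = (\<Sum>g\<in>G. if g = g' then sgn (u (\<iota> g')) else 0)"
    proof (rule sum.cong)
      fix g assume g: "g \<in> G"
      show "(sgn (u (\<iota> g)) / inner (h g) g) * inner (h g) g' = (if g = g' then sgn (u (\<iota> g')) else 0)"
        using hpos[OF g] hzero[OF g g'] by auto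
    qed simp
    also have "\<dots> = sgn (u (\<iota> g'))" using fG g' by simp
    finally show ?thesis .
  qed
  have key: "sgn (u i) = inner q (gv i)" if iT: "i \<in> T" for i
  proof -
    have "gv i \<in> span G" using G(3) iT by blast
    then obtain \<alpha> where \<alpha>: "(\<Sum>g\<in>G. \<alpha> g *\<^sub>R g) = gv i" using span_finite[OF fG] by auto
    define D where "D = insert i (\<iota> ` G)"
    have fD: "finite D" unfolding D_def using fG by simp
    have DT: "D \<subseteq> T" unfolding D_def using iT \<iota> by blast
    have iD: "i \<in> D" and \<iota>D: "\<And>g. g \<in> G \<Longrightarrow> \<iota> g \<in> D" unfolding D_def by auto
    define d where "d j = (if j = i then 1 else 0) - (\<Sum>g\<in>G. \<alpha> g * (if j = \<iota> g then 1 else 0))" for j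
    have dz: "d j = 0" if "j \<notin> D" for j
    proof -
      have "j \<noteq> i" using that iD by blast
      moreover have "\<forall>g\<in>G. j \<noteq> \<iota> g" using that \<iota>D by blast
      ultimately show ?thesis unfolding d_def by simp
    qed
    have dsum: "(\<Sum>j\<in>D. d j * \<phi> j) = \<phi> i - (\<Sum>g\<in>G. \<alpha> g * \<phi> (\<iota> g))" for \<phi> :: "nat \<Rightarrow> real"
    proof -
      have "(\<Sum>j\<in>D. d j * \<phi> j) = (\<Sum>j\<in>D. (if j = i then \<phi> j else 0) - (\<Sum>g\<in>G. \<alpha> g * (if j = \<iota> g then \<phi> j else 0)))"
        unfolding d_def by (intro sum.cong) (auto simp: left_diff_distrib sum_distrib_right intro!: sum.cong)
      also have "\<dots> = (\<Sum>j\<in>D. if j = i then \<phi> j else 0) - (\<Sum>g\<in>G. \<alpha> g * (\<Sum>j\<in>D. if j = \<iota> g then \<phi> j else 0))"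
        by (simp add: sum_subtractf sum.swap[of _ D] sum_distrib_left)
      also have "\<dots> = \<phi> i - (\<Sum>g\<in>G. \<alpha> g * \<phi> (\<iota> g))"
        using fD iD \<iota>D by simp
      finally show ?thesis .
    qed
    have sd: "summable (\<lambda>j. g j)" if "\<And>j. j \<notin> D \<Longrightarrow> g j = 0" for g :: "nat \<Rightarrow> real"
      by (rule summable_finite[OF fD]) (use that in auto)
    have Ft: "F (\<lambda>j. u j + t * d j)" for t
    proof -
      have "summable (\<lambda>j. \<bar>u j\<bar> + \<bar>t\<bar> * \<bar>d j\<bar>)"
      proof (rule summable_add)
        show "summable (\<lambda>j. \<bar>u j\<bar>)" using lu unfolding in_l1_def .
        have "summable (\<lambda>j. \<bar>d j\<bar>)" by (rule sd) (simp add: dz)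
        thus "summable (\<lambda>j. \<bar>t\<bar> * \<bar>d j\<bar>)" by (rule summable_mult)
      qed
      hence l: "in_l1 (\<lambda>j. u j + t * d j)" unfolding in_l1_def
        by (rule summable_comparison_test') (simp add: abs_mult order_trans[OF abs_triangle_ineq])
      have "(\<Sum>j. (u j + t * d j) * A v j) = inner f v" if v: "v \<in> span B" for v
      proof -
        have su: "summable (\<lambda>j. u j * A v j)" using summ_uA lu by auto
        have sdd: "summable (\<lambda>j. t * (d j * A v j))" by (rule sd) (simp add: dz)
        have "(\<Sum>j. (u j + t * d j) * A v j) = (\<Sum>j. u j * A v j + t * (d j * A v j))"
          by (simp add: algebra_simps)
        also have "\<dots> = (\<Sum>j. u j * A v j) + (\<Sum>j. t * (d j * A v j))"
          using su sdd by (intro suminf_add[symmetric])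
        also have "(\<Sum>j. t * (d j * A v j)) = (\<Sum>j\<in>D. t * (d j * A v j))"
          by (rule suminf_finite[OF fD]) (simp add: dz)
        also have "\<dots> = t * (A v i - (\<Sum>g\<in>G. \<alpha> g * A v (\<iota> g)))"
          using dsum[of "A v"] by (simp add: sum_distrib_left[symmetric])
        also have "(\<Sum>g\<in>G. \<alpha> g * A v (\<iota> g)) = (\<Sum>g\<in>G. \<alpha> g * inner g v)"
          using gvA[OF v] \<iota> by (intro sum.cong) (auto simp flip: gvA[OF v])
        also have "\<dots> = inner (\<Sum>g\<in>G. \<alpha> g *\<^sub>R g) v" by (simp add: inner_sum_left)
        also have "\<dots> = A v i" using \<alpha> gvA[OF v] by simp
        finally show ?thesis using Fu v feas_iff by simp
      qed
      thus ?thesis using l feas_iff by simp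
    qed
    have l1t: "l1norm (\<lambda>j. u j + t * d j) = l1norm u + (\<Sum>j\<in>D. \<bar>u j + t * d j\<bar> - \<bar>u j\<bar>)" for t
    proof -
      have sr: "summable (\<lambda>j. \<bar>u j + t * d j\<bar> - \<bar>u j\<bar>)" by (rule sd) (simp add: dz)
      have su: "summable (\<lambda>j. \<bar>u j\<bar>)" using lu unfolding in_l1_def .
      have "l1norm (\<lambda>j. u j + t * d j) = (\<Sum>j. \<bar>u j\<bar> + (\<bar>u j + t * d j\<bar> - \<bar>u j\<bar>))"
        unfolding l1norm_def by simp
      also have "\<dots> = l1norm u + (\<Sum>j. \<bar>u j + t * d j\<bar> - \<bar>u j\<bar>)"
        unfolding l1norm_def using su sr by (intro suminf_add[symmetric])
      also have "(\<Sum>j. \<bar>u j + t * d j\<bar> - \<bar>u j\<bar>) = (\<Sum>j\<in>D. \<bar>u j + t * d j\<bar> - \<bar>u j\<bar>)"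
        by (rule suminf_finite[OF fD]) (simp add: dz)
      finally show ?thesis .
    qed
    have uD: "u j \<noteq> 0" if "j \<in> D" for j using DT that unfolding T_def supp_def by blast
    define e where "e = Min ((\<lambda>j. \<bar>u j\<bar> / (\<bar>d j\<bar> + 1)) ` D)"
    have epos: "0 < e" unfolding e_def using fD iD uD by (subst Min_gr_iff) auto
    have ebd: "e * \<bar>d j\<bar> \<le> \<bar>u j\<bar>" if j: "j \<in> D" for j
    proof -
      have "e \<le> \<bar>u j\<bar> / (\<bar>d j\<bar> + 1)" unfolding e_def using fD j by simp
      hence "e * (\<bar>d j\<bar> + 1) \<le> \<bar>u j\<bar>" by (simp add: field_simps)
      thus ?thesis using epos by (simp add: algebra_simps)
    qed
    define K where "K = (\<Sum>j\<in>D. sgn (u j) * d j)"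
    have l1K: "l1norm (\<lambda>j. u j + t * d j) = l1norm u + t * K" if "\<bar>t\<bar> = e" for t
    proof -
      have "(\<Sum>j\<in>D. \<bar>u j + t * d j\<bar> - \<bar>u j\<bar>) = (\<Sum>j\<in>D. t * (sgn (u j) * d j))"
      proof (rule sum.cong)
        fix j assume j: "j \<in> D"
        show "\<bar>u j + t * d j\<bar> - \<bar>u j\<bar> = t * (sgn (u j) * d j)"
          using abs_lin[OF uD[OF j], of t "d j"] ebd[OF j] that by simp
      qed simp
      thus ?thesis using l1t[of t] unfolding K_def by (simp add: sum_distrib_left)
    qed
    have "0 \<le> e * K" using opt[OF Ft[of e]] l1K[of e] epos by simp
    moreover have "0 \<le> - e * K" using opt[OF Ft[of "- e"]] l1K[of "- e"] epos by simp
    ultimately have K0: "K = 0" using epos by (simp add: zero_le_mult_iff mult_le_0_iff)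
    have "K = sgn (u i) - (\<Sum>g\<in>G. \<alpha> g * sgn (u (\<iota> g)))"
      unfolding K_def using dsum[of "\<lambda>j. sgn (u j)"] by (simp add: mult.commute)
    also have "(\<Sum>g\<in>G. \<alpha> g * sgn (u (\<iota> g))) = (\<Sum>g\<in>G. \<alpha> g * inner q g)"
      using qg by simp
    also have "\<dots> = inner q (\<Sum>g\<in>G. \<alpha> g *\<^sub>R g)" by (simp add: inner_sum_right)
    also have "\<dots> = inner q (gv i)" using \<alpha> by simp
    finally show ?thesis using K0 by simp
  qed
  have "(\<lambda>i. norm q * norm (gv i)) \<longlonglongrightarrow> norm q * 0" by (intro tendsto_mult tendsto_const gv0)
  hence "eventually (\<lambda>i. norm q * norm (gv i) < 1) sequentially" by (intro order_tendstoD(2)) auto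
  then obtain N where N: "\<And>i. i \<ge> N \<Longrightarrow> norm q * norm (gv i) < 1" unfolding eventually_sequentially by blast
  have "T \<subseteq> {..<N}"
  proof
    fix i assume iT: "i \<in> T"
    have "u i \<noteq> 0" using iT unfolding T_def supp_def by simp
    hence "\<bar>sgn (u i)\<bar> = 1" by (cases "u i > 0") auto
    hence "1 = \<bar>inner q (gv i)\<bar>" using key[OF iT] by simp
    also have "\<dots> \<le> norm q * norm (gv i)" by (rule Cauchy_Schwarz_ineq2)
    finally show "i \<in> {..<N}" using N by (meson leI lessThan_iff not_less)
  qed
  thus ?thesis unfolding T_def using finite_subset by blast
qed

end


theorem lemma5:
  fixes A :: "'h::{real_inner, complete_space} \<Rightarrow> (nat \<Rightarrow> real)"
    and A' :: "(nat \<Rightarrow> real) \<Rightarrow> 'h"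
    and B :: "'h set" and n :: nat and fdelta :: 'h
  assumes A_lin: "\<And>a b x y. A (a *\<^sub>R x + b *\<^sub>R y) = (\<lambda>i. a * A x i + b * A y i)"
    and A_c0: "\<And>z. in_c0 (A z)"
    and A_bdd: "\<exists>C. \<forall>z i. \<bar>A z i\<bar> \<le> C * norm z"
    and A'_lin: "\<And>u v a b. in_l1 u \<Longrightarrow> in_l1 v \<Longrightarrow> A' (\<lambda>i. a * u i + b * v i) = a *\<^sub>R A' u + b *\<^sub>R A' v"
    and adjoint: "\<And>u z. in_l1 u \<Longrightarrow> inner (A' u) z = (\<Sum>i. u i * A z i)"
    and A_inj: "inj A"
    and A'_inj: "inj_on A' {u. in_l1 u}"
    and B_fin: "finite B" and B_ind: "independent B" and B_card: "card B = n"
  shows "\<forall>u. is_solution (span B) A' fdelta u \<longrightarrow>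
           (\<exists>(k::nat) c w. (\<forall>j<k. is_minsupp_solution (span B) A' fdelta (w j) \<and> c j \<ge> (0::real))
                    \<and> (\<Sum>j<k. c j) = 1
                    \<and> u = (\<lambda>i. \<Sum>j<k. c j * w j i))"
proof -
  interpret prob A A' B fdelta
    using A_lin A_c0 A_bdd adjoint B_fin by unfold_locales auto
  show ?thesis
  proof (intro allI impI)
    fix u assume "is_solution (span B) A' fdelta u"
    hence s: "sol (feasible (span B) A' fdelta) u" by (simp add: is_solution_def sol_def)
    have "CC (msol (feasible (span B) A' fdelta)) u" by (rule all_CC[OF s fin_supp[OF s]])
    moreover have "msol (feasible (span B) A' fdelta) = is_minsupp_solution (span B) A' fdelta"
      by (auto simp: fun_eq_iff msol_def sol_def is_minsupp_solution_def is_solution_def)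
    ultimately show "\<exists>(k::nat) c w. (\<forall>j<k. is_minsupp_solution (span B) A' fdelta (w j) \<and> c j \<ge> (0::real))
                    \<and> (\<Sum>j<k. c j) = 1 \<and> u = (\<lambda>i. \<Sum>j<k. c j * w j i)"
      unfolding CC_def by simp
  qed
qed

end
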